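(* Let $T>0$, $I=[0,T]$. Let $\Phi:\mathbb{R}\to\mathbb{R}$ be a strictly increasing homeomorphism; $a\in C(I\times\mathbb{R},\mathbb{R})$ with $a(t,x)\ge h(t)$ for all $(t,x)$, where $h\in C(I,\mathbb{R})$, $h\ge0$, $1/h\in L^p(I)$ for some $p>1$; $f:I\times\mathbb{R}^2\to\mathbb{R}$ Carathéodory. Let $\alpha,\beta\in W^{1,p}(I)$ be respectively a lower and an upper solution of $(\Phi(a(t,x(t))x'(t)))'=f(t,x(t),x'(t))$ with $\alpha\le\beta$ on $I$, and assume $a(0,x)\ne0$ and $a(T,x)\ne0$ for every $x\in\mathbb{R}$. Then: (i) if $\alpha(0)=\beta(0)$, then $\mathcal{A}_\alpha(0)\le\mathcal{A}_\beta(0)$; (ii) if $\alpha(T)=\beta(T)$, then $\mathcal{A}_\alpha(T)\ge\mathcal{A}_\beta(T)$.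
   Context: A continuous $\alpha$ is a lower [upper] solution if $\alpha\in W^{1,1}(I)$, $t\mapsto\Phi(a(t,\alpha(t))\alpha'(t))\in W^{1,1}(I)$ and its derivative is $\ge f(t,\alpha(t),\alpha'(t))$ [$\le$] for a.e. $t$. $\mathcal{A}_\alpha$ denotes the unique continuous function on $I$ equal to $a(t,\alpha(t))\alpha'(t)$ a.e. Carathéodory: measurable in $t$, continuous in $(x,y)$ for a.e. $t$. *)

theory Defs
  imports "HOL-Analysis.Analysis"
begin

definition ae_on :: "real \<Rightarrow> (real \<Rightarrow> bool) \<Rightarrow> bool" where
  "ae_on T P \<longleftrightarrow> (\<exists>N. negligible N \<and> (\<forall>t\<in>{0..T} - N. P t))"

definition Lp_on :: "real \<Rightarrow> real \<Rightarrow> (real \<Rightarrow> real) \<Rightarrow> bool" where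
  "Lp_on p T g \<longleftrightarrow> g measurable_on {0..T} \<and> (\<lambda>t. \<bar>g t\<bar> powr p) integrable_on {0..T}"

text \<open>u (continuous representative) lies in W^{1,1}(I) with weak derivative u'
  (i.e. u is absolutely continuous on I with u' as a.e. derivative).\<close>
definition W11_deriv :: "real \<Rightarrow> (real \<Rightarrow> real) \<Rightarrow> (real \<Rightarrow> real) \<Rightarrow> bool" where
  "W11_deriv T u u' \<longleftrightarrow> u' absolutely_integrable_on {0..T} \<and>
     (\<forall>t\<in>{0..T}. u t = u 0 + integral {0..t} u')"

definition in_W1p :: "real \<Rightarrow> real \<Rightarrow> (real \<Rightarrow> real) \<Rightarrow> bool" where
  "in_W1p p T u \<longleftrightarrow> (\<exists>u'. W11_deriv T u u' \<and> Lp_on p T u')"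

definition caratheodory :: "real \<Rightarrow> (real \<Rightarrow> real \<Rightarrow> real \<Rightarrow> real) \<Rightarrow> bool" where
  "caratheodory T f \<longleftrightarrow> (\<forall>x y. (\<lambda>t. f t x y) measurable_on {0..T}) \<and>
     ae_on T (\<lambda>t. continuous_on UNIV (\<lambda>(x, y). f t x y))"

definition lower_solution ::
  "real \<Rightarrow> (real \<Rightarrow> real) \<Rightarrow> (real \<Rightarrow> real \<Rightarrow> real) \<Rightarrow> (real \<Rightarrow> real \<Rightarrow> real \<Rightarrow> real)
    \<Rightarrow> (real \<Rightarrow> real) \<Rightarrow> bool" where
  "lower_solution T \<Phi> a f \<alpha> \<longleftrightarrow> continuous_on {0..T} \<alpha> \<and>
     (\<exists>\<alpha>'. W11_deriv T \<alpha> \<alpha>' \<and>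
       (\<exists>w w'. W11_deriv T w w' \<and> ae_on T (\<lambda>t. w t = \<Phi> (a t (\<alpha> t) * \<alpha>' t)) \<and>
               ae_on T (\<lambda>t. w' t \<ge> f t (\<alpha> t) (\<alpha>' t))))"

definition upper_solution ::
  "real \<Rightarrow> (real \<Rightarrow> real) \<Rightarrow> (real \<Rightarrow> real \<Rightarrow> real) \<Rightarrow> (real \<Rightarrow> real \<Rightarrow> real \<Rightarrow> real)
    \<Rightarrow> (real \<Rightarrow> real) \<Rightarrow> bool" where
  "upper_solution T \<Phi> a f \<beta> \<longleftrightarrow> continuous_on {0..T} \<beta> \<and>
     (\<exists>\<beta>'. W11_deriv T \<beta> \<beta>' \<and>
       (\<exists>w w'. W11_deriv T w w' \<and> ae_on T (\<lambda>t. w t = \<Phi> (a t (\<beta> t) * \<beta>' t)) \<and>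
               ae_on T (\<lambda>t. w' t \<le> f t (\<beta> t) (\<beta>' t))))"

definition is_calA :: "real \<Rightarrow> (real \<Rightarrow> real \<Rightarrow> real) \<Rightarrow> (real \<Rightarrow> real) \<Rightarrow> (real \<Rightarrow> real) \<Rightarrow> bool" where
  "is_calA T a u A \<longleftrightarrow> continuous_on {0..T} A \<and>
     (\<exists>u'. W11_deriv T u u' \<and> ae_on T (\<lambda>t. A t = a t (u t) * u' t))"

end

theory Submission
  imports Defs
begin

lemma W11_diff_ge:
  assumes U: "W11_deriv T u u'" and V: "W11_deriv T v v'" and st: "0 \<le> s" "s \<le> t" "t \<le> T"
    and N: "negligible N" and G: "\<forall>x\<in>{s..t} - N. u' x - v' x \<ge> c"
  shows "(u t - v t) - (u s - v s) \<ge> c * (t - s)"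
proof -
  have iu: "u' integrable_on {0..T}" and iv: "v' integrable_on {0..T}"
    using U V unfolding W11_deriv_def absolutely_integrable_on_def by auto
  have iu0: "u' integrable_on {0..t}" and iv0: "v' integrable_on {0..t}"
    using integrable_on_subinterval[OF iu, of 0 t] integrable_on_subinterval[OF iv, of 0 t] st by auto
  have cu: "integral {0..t} u' = integral {0..s} u' + integral {s..t} u'"
    using Henstock_Kurzweil_Integration.integral_combine[OF st(1) st(2) iu0] by simp
  have cv: "integral {0..t} v' = integral {0..s} v' + integral {s..t} v'"
    using Henstock_Kurzweil_Integration.integral_combine[OF st(1) st(2) iv0] by simp
  have Ut: "\<forall>t\<in>{0..T}. u t = u 0 + integral {0..t} u'" using U unfolding W11_deriv_def by blast
  have Vt: "\<forall>t\<in>{0..T}. v t = v 0 + integral {0..t} v'" using V unfolding W11_deriv_def by blast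
  have ts: "t \<in> {0..T}" "s \<in> {0..T}" using st by auto
  have u1: "u t = u 0 + integral {0..t} u'" "u s = u 0 + integral {0..s} u'"
    using bspec[OF Ut ts(1)] bspec[OF Ut ts(2)] by blast+
  have v1: "v t = v 0 + integral {0..t} v'" "v s = v 0 + integral {0..s} v'"
    using bspec[OF Vt ts(1)] bspec[OF Vt ts(2)] by blast+
  have ut: "u t - u s = integral {s..t} u'"
    using u1 cu by simp
  have vt: "v t - v s = integral {s..t} v'"
    using v1 cv by simp
  have ius: "u' integrable_on {s..t}" and ivs: "v' integrable_on {s..t}"
    using integrable_on_subinterval[OF iu, of s t] integrable_on_subinterval[OF iv, of s t] st by auto
  define g where "g x = u' x - v' x" for x
  define g' where "g' x = (if x \<in> N then c else g x)" for x
  have ig: "g integrable_on {s..t}" unfolding g_def using ius ivs by (rule integrable_diff)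
  have eqg: "integral {s..t} g = integral {s..t} u' - integral {s..t} v'"
    unfolding g_def using ius ivs by (rule integral_diff)
  have sp: "\<And>x. x \<in> {s..t} - N \<Longrightarrow> g' x = g x" unfolding g'_def by auto
  have ig': "g' integrable_on {s..t}"
    by (rule integrable_spike[OF ig N]) (simp add: sp)
  have eq': "integral {s..t} g' = integral {s..t} g"
    by (rule integral_spike[OF N]) (simp add: sp)
  have "integral {s..t} (\<lambda>_. c) \<le> integral {s..t} g'"
    apply (rule integral_le[OF integrable_const_ivl ig'])
    using G unfolding g'_def g_def by auto
  then have "(t - s) * c \<le> integral {s..t} u' - integral {s..t} v'" using st eq' eqg by simp
  then show ?thesis using ut vt by (simp add: algebra_simps)
qed

lemma local_sign:
  assumes Au: "is_calA T a u Au" and Av: "is_calA T a v Av"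
    and ac: "continuous_on ({0..T} \<times> UNIV) (\<lambda>(t, x). a t x)"
    and cu: "continuous_on {0..T} u" and cv: "continuous_on {0..T} v"
    and t0: "t0 \<in> {0..T}" and eq: "u t0 = v t0" and apos: "a t0 (u t0) > 0"
    and gt: "Au t0 > Av t0"
  shows "\<exists>u' v' N c d. W11_deriv T u u' \<and> W11_deriv T v v' \<and> negligible N \<and> c > 0 \<and> d > 0 \<and>
     (\<forall>t\<in>{0..T} - N. dist t t0 < d \<longrightarrow> u' t - v' t \<ge> c)"
proof -
  obtain u' N1 where U: "W11_deriv T u u'" "negligible N1"
      "\<forall>t\<in>{0..T} - N1. Au t = a t (u t) * u' t" and cAu: "continuous_on {0..T} Au"
    using Au unfolding is_calA_def ae_on_def by blast
  obtain v' N2 where V: "W11_deriv T v v'" "negligible N2"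
      "\<forall>t\<in>{0..T} - N2. Av t = a t (v t) * v' t" and cAv: "continuous_on {0..T} Av"
    using Av unfolding is_calA_def ae_on_def by blast
  have pu: "continuous_on {0..T} (\<lambda>t. (t, u t))" using cu by (intro continuous_intros)
  have pv: "continuous_on {0..T} (\<lambda>t. (t, v t))" using cv by (intro continuous_intros)
  have cau: "continuous_on {0..T} (\<lambda>t. a t (u t))"
    using continuous_on_compose2[OF ac pu] by auto
  have cav: "continuous_on {0..T} (\<lambda>t. a t (v t))"
    using continuous_on_compose2[OF ac pv] by auto
  let ?F = "at t0 within {0..T}"
  have l1: "((\<lambda>t. a t (u t)) \<longlongrightarrow> a t0 (u t0)) ?F" using cau t0 by (simp add: continuous_on_def)
  have l2: "((\<lambda>t. a t (v t)) \<longlongrightarrow> a t0 (u t0)) ?F" using cav t0 eq by (simp add: continuous_on_def)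
  have l3: "(Au \<longlongrightarrow> Au t0) ?F" using cAu t0 by (simp add: continuous_on_def)
  have l4: "(Av \<longlongrightarrow> Av t0) ?F" using cAv t0 by (simp add: continuous_on_def)
  define G where "G t = Au t / a t (u t) - Av t / a t (v t)" for t
  define c where "c = (Au t0 - Av t0) / a t0 (u t0) / 2"
  have c: "c > 0" using gt apos unfolding c_def by simp
  have lG: "(G \<longlongrightarrow> (Au t0 - Av t0) / a t0 (u t0)) ?F"
  proof -
    have "(G \<longlongrightarrow> Au t0 / a t0 (u t0) - Av t0 / a t0 (u t0)) ?F"
      unfolding G_def using apos
      by (intro tendsto_diff tendsto_divide l1 l2 l3 l4) auto
    then show ?thesis by (simp add: diff_divide_distrib)
  qed
  have e1: "\<forall>\<^sub>F t in ?F. G t > c"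
    using order_tendstoD(1)[OF lG] c unfolding c_def by simp
  have e2: "\<forall>\<^sub>F t in ?F. a t (u t) > 0" using order_tendstoD(1)[OF l1 apos] .
  have e3: "\<forall>\<^sub>F t in ?F. a t (v t) > 0" using order_tendstoD(1)[OF l2 apos] .
  have ev: "\<forall>\<^sub>F t in ?F. G t > c \<and> a t (u t) > 0 \<and> a t (v t) > 0"
    using e1 e2 e3 by eventually_elim auto
  then obtain d where d: "d > 0" and dd: "\<forall>t\<in>{0..T}. t \<noteq> t0 \<and> dist t t0 < d \<longrightarrow>
      G t > c \<and> a t (u t) > 0 \<and> a t (v t) > 0"
  proof -
    have "\<exists>d>0. \<forall>t\<in>{0..T}. t \<noteq> t0 \<and> dist t t0 < d \<longrightarrow>
      G t > c \<and> a t (u t) > 0 \<and> a t (v t) > 0" using iffD1[OF eventually_at ev] .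
    then show ?thesis using that by blast
  qed
  have N: "negligible (N1 \<union> N2 \<union> {t0})" using U(2) V(2) by simp
  have HH: "\<forall>t\<in>{0..T} - (N1 \<union> N2 \<union> {t0}). dist t t0 < d \<longrightarrow> u' t - v' t \<ge> c"
  proof (intro ballI impI)
    fix t assume t: "t \<in> {0..T} - (N1 \<union> N2 \<union> {t0})" and dt: "dist t t0 < d"
    have t1: "t \<in> {0..T}" "t \<noteq> t0" "t \<in> {0..T} - N1" "t \<in> {0..T} - N2" using t by auto
    have h: "G t > c \<and> a t (u t) > 0 \<and> a t (v t) > 0" using dd t1(1,2) dt by blast
    have e1: "Au t = a t (u t) * u' t" using U(3) t1(3) by blast
    have e2: "Av t = a t (v t) * v' t" using V(3) t1(4) by blast
    have q1: "u' t = Au t / a t (u t)" using e1 h by (simp add: field_simps)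
    have q2: "v' t = Av t / a t (v t)" using e2 h by (simp add: field_simps)
    show "u' t - v' t \<ge> c" using h unfolding G_def q1 q2 by linarith
  qed
  show ?thesis
    apply (rule exI[of _ u'], rule exI[of _ v'], rule exI[of _ "N1 \<union> N2 \<union> {t0}"], rule exI[of _ c], rule exI[of _ d])
    using HH U(1) V(1) N c d by simp
qed

theorem lemma4p3:
  fixes T p :: real and \<Phi> h :: "real \<Rightarrow> real" and a :: "real \<Rightarrow> real \<Rightarrow> real"
    and f :: "real \<Rightarrow> real \<Rightarrow> real \<Rightarrow> real" and \<alpha> \<beta> A\<alpha> A\<beta> :: "real \<Rightarrow> real"
  assumes "T > 0"
    and "strict_mono \<Phi>" and "\<exists>\<Psi>. homeomorphism UNIV UNIV \<Phi> \<Psi>"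
    and "continuous_on ({0..T} \<times> UNIV) (\<lambda>(t, x). a t x)"
    and "\<forall>t\<in>{0..T}. \<forall>x. a t x \<ge> h t"
    and "continuous_on {0..T} h" and "\<forall>t\<in>{0..T}. h t \<ge> 0"
    and "p > 1" and "negligible {t\<in>{0..T}. h t = 0}" and "Lp_on p T (\<lambda>t. 1 / h t)"
    and "caratheodory T f"
    and "in_W1p p T \<alpha>" and "in_W1p p T \<beta>"
    and "lower_solution T \<Phi> a f \<alpha>" and "upper_solution T \<Phi> a f \<beta>"
    and "\<forall>t\<in>{0..T}. \<alpha> t \<le> \<beta> t"
    and "\<forall>x. a 0 x \<noteq> 0" and "\<forall>x. a T x \<noteq> 0"
    and "is_calA T a \<alpha> A\<alpha>" and "is_calA T a \<beta> A\<beta>"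
  shows "(\<alpha> 0 = \<beta> 0 \<longrightarrow> A\<alpha> 0 \<le> A\<beta> 0) \<and> (\<alpha> T = \<beta> T \<longrightarrow> A\<alpha> T \<ge> A\<beta> T)"
proof -
  note T = assms(1)
  have ca: "continuous_on {0..T} \<alpha>" using assms(14) unfolding lower_solution_def by blast
  have cb: "continuous_on {0..T} \<beta>" using assms(15) unfolding upper_solution_def by blast
  have a0: "a 0 x > 0" for x
  proof -
    have "h 0 \<le> a 0 x" "0 \<le> h 0" "a 0 x \<noteq> 0" using assms(5,7,17) T by auto
    then show ?thesis by linarith
  qed
  have aT: "a T x > 0" for x
  proof -
    have "h T \<le> a T x" "0 \<le> h T" "a T x \<noteq> 0" using assms(5,7,18) T by auto
    then show ?thesis by linarith
  qed
  have t00: "0 \<in> {0..T}" and tTT: "T \<in> {0..T}" using T by auto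
  have i: "A\<alpha> 0 \<le> A\<beta> 0" if e: "\<alpha> 0 = \<beta> 0"
  proof (rule ccontr)
    assume "\<not> ?thesis"
    then have gt: "A\<alpha> 0 > A\<beta> 0" by simp
    obtain u' v' N c d where U: "W11_deriv T \<alpha> u'" and V: "W11_deriv T \<beta> v'" and N: "negligible N"
      and c: "c > 0" and d: "d > 0" and H: "\<forall>t\<in>{0..T} - N. dist t 0 < d \<longrightarrow> u' t - v' t \<ge> c"
      using local_sign[OF assms(19,20,4) ca cb t00 e a0 gt] by blast
    define s where "s = min (d/2) T"
    have s: "0 < s" "s \<le> T" "s < d" using d T unfolding s_def by auto
    have "(\<alpha> s - \<beta> s) - (\<alpha> 0 - \<beta> 0) \<ge> c * (s - 0)"
    proof (rule W11_diff_ge[OF U V _ _ _ N])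
      show "\<forall>x\<in>{0..s} - N. c \<le> u' x - v' x"
      proof
        fix x assume x: "x \<in> {0..s} - N"
        then have "x \<in> {0..T} - N" "dist x 0 < d" using s by (auto simp: dist_real_def)
        then show "c \<le> u' x - v' x" using H by blast
      qed
    qed (use s in auto)
    moreover have "c * (s - 0) > 0" using c s by simp
    ultimately have "\<alpha> s - \<beta> s > 0" using e by linarith
    moreover have "\<alpha> s \<le> \<beta> s" using assms(16) s by simp
    ultimately show False by linarith
  qed
  have ii: "A\<alpha> T \<ge> A\<beta> T" if e: "\<alpha> T = \<beta> T"
  proof (rule ccontr)
    assume "\<not> ?thesis"
    then have gt: "A\<beta> T > A\<alpha> T" by simp
    obtain u' v' N c d where U: "W11_deriv T \<beta> u'" and V: "W11_deriv T \<alpha> v'" and N: "negligible N"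
      and c: "c > 0" and d: "d > 0" and H: "\<forall>t\<in>{0..T} - N. dist t T < d \<longrightarrow> u' t - v' t \<ge> c"
      using local_sign[OF assms(20,19,4) cb ca tTT e[symmetric] aT gt] by blast
    define s where "s = T - min (d/2) T"
    have s: "0 \<le> s" "s < T" "T - s < d" using d T unfolding s_def by auto
    have "(\<beta> T - \<alpha> T) - (\<beta> s - \<alpha> s) \<ge> c * (T - s)"
    proof (rule W11_diff_ge[OF U V _ _ _ N])
      show "\<forall>x\<in>{s..T} - N. c \<le> u' x - v' x"
      proof
        fix x assume x: "x \<in> {s..T} - N"
        then have "x \<in> {0..T} - N" "dist x T < d" using s by (auto simp: dist_real_def)
        then show "c \<le> u' x - v' x" using H by blast
      qed
    qed (use s in auto)
    moreover have "c * (T - s) > 0" using c s by simp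
    ultimately have "\<alpha> s - \<beta> s > 0" using e by linarith
    moreover have "\<alpha> s \<le> \<beta> s" using assms(16) s by simp
    ultimately show False by linarith
  qed
  show ?thesis using i ii by blast
qed

end
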